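(* Let $\theta=(\{X_s\}_{s\in\mathcal{S}},\{\theta_s\}_{s\in\mathcal{S}})$ be an ordered partial action of an inverse semigroupoid $\mathcal{S}$ on a semilatticeoid $X$ equipped with its natural partial order. Then for each $s\in\mathcal{S}$: (a) $X_s$ is an ideal of $X$, i.e. if $x\in X$, $y\in X_s$ and $(x,y)\in X^{(2)}$ then $xy\in X_s$; (b) $\theta_s$ is a morphism, i.e. for all $x,y\in X_{s^*}$ with $(x,y)\in X^{(2)}$ we have $(\theta_s(x),\theta_s(y))\in X^{(2)}$ and $\theta_s(xy)=\theta_s(x)\theta_s(y)$.
   Context: Inverse semigroupoid: arrows $\mathcal{S}$, objects $\mathcal{S}^{(0)}$, maps $d,c$, associative multiplication on $\mathcal{S}^{(2)}=\{(s,t):d(s)=c(t)\}$ with $d(st)=d(t)$, $c(st)=c(s)$, and unique $s^*$ with $ss^*s=s$, $s^*ss^*=s^*$; natural partial order on parallel arrows: $s\leqslant t$ iff $s=te$ for an idempotent $e$ with $(t,e)\in\mathcal{S}^{(2)}$. A semilatticeoid is an inverse semigroupoid $X$ all of whose elements are idempotent; equivalently a disjoint union of meet semilattices $X_u$, $u\in X^{(0)}$, where $(x,y)\in X^{(2)}$ iff $x,y$ lie over the same object and $xy$ is their meet; the natural order is $x\leqslant y$ iff $x=xy$ (same object). A partial action of $\mathcal{S}$ on a set $X$ is a pair $(\{X_s\},\{\theta_s\})$ of subsets $X_s\subseteq X$ and maps $\theta_s:X_{s^*}\to X_s$ such that: each $\theta_s$ is a bijection with $\theta_s^{-1}=\theta_{s^*}$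 and $X=\bigcup_s X_s$; $\theta_s\circ\theta_t\subseteq\theta_{st}$ as partial maps for $(s,t)\in\mathcal{S}^{(2)}$; $X_s\subseteq X_t$ whenever $s\leqslant t$. For a poset $X$ it is ordered if each $X_s$ is an order ideal and each $\theta_s$ an order isomorphism. *)

theory Defs
  imports Main
begin

text \<open>An inverse semigroupoid: arrows, objects, domain, codomain, partial
multiplication (meaningful on composable pairs) and the inverse map.\<close>

record ('a, 'o) semigroupoid =
  arr  :: "'a set"
  obj  :: "'o set"
  dm   :: "'a \<Rightarrow> 'o"
  cd   :: "'a \<Rightarrow> 'o"
  mult :: "'a \<Rightarrow> 'a \<Rightarrow> 'a"
  star :: "'a \<Rightarrow> 'a"

definition composable :: "('a, 'o, 'e) semigroupoid_scheme \<Rightarrow> 'a \<Rightarrow> 'a \<Rightarrow> bool" where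
  "composable S s t \<longleftrightarrow> s \<in> arr S \<and> t \<in> arr S \<and> dm S s = cd S t"

definition inverse_semigroupoid :: "('a, 'o, 'e) semigroupoid_scheme \<Rightarrow> bool" where
  "inverse_semigroupoid S \<longleftrightarrow>
     (\<forall>s\<in>arr S. dm S s \<in> obj S \<and> cd S s \<in> obj S) \<and>
     (\<forall>s t. composable S s t \<longrightarrow>
        mult S s t \<in> arr S \<and> dm S (mult S s t) = dm S t \<and> cd S (mult S s t) = cd S s) \<and>
     (\<forall>r s t. composable S r s \<longrightarrow> composable S s t \<longrightarrow>
        mult S (mult S r s) t = mult S r (mult S s t)) \<and>
     (\<forall>s\<in>arr S. star S s \<in> arr S \<and> dm S (star S s) = cd S s \<and> cd S (star S s) = dm S s \<and>
        mult S (mult S s (star S s)) s = s \<and>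
        mult S (mult S (star S s) s) (star S s) = star S s \<and>
        (\<forall>t\<in>arr S. dm S t = cd S s \<and> cd S t = dm S s \<and>
           mult S (mult S s t) s = s \<and> mult S (mult S t s) t = t \<longrightarrow> t = star S s))"

definition idempotent :: "('a, 'o, 'e) semigroupoid_scheme \<Rightarrow> 'a \<Rightarrow> bool" where
  "idempotent S e \<longleftrightarrow> composable S e e \<and> mult S e e = e"

definition nat_le :: "('a, 'o, 'e) semigroupoid_scheme \<Rightarrow> 'a \<Rightarrow> 'a \<Rightarrow> bool" where
  "nat_le S s t \<longleftrightarrow> s \<in> arr S \<and> t \<in> arr S \<and> dm S s = dm S t \<and> cd S s = cd S t \<and>
     (\<exists>e. idempotent S e \<and> composable S t e \<and> s = mult S t e)"

definition semilatticeoid :: "('a, 'o, 'e) semigroupoid_scheme \<Rightarrow> bool" where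
  "semilatticeoid X \<longleftrightarrow> inverse_semigroupoid X \<and> (\<forall>x\<in>arr X. idempotent X x)"

definition partial_action ::
  "('a, 'o, 'e) semigroupoid_scheme \<Rightarrow> 'x set \<Rightarrow> ('a \<Rightarrow> 'x set) \<Rightarrow> ('a \<Rightarrow> 'x \<Rightarrow> 'x) \<Rightarrow> bool" where
  "partial_action S A Xs th \<longleftrightarrow>
     (\<forall>s\<in>arr S. Xs s \<subseteq> A) \<and>
     (\<forall>s\<in>arr S. bij_betw (th s) (Xs (star S s)) (Xs s) \<and>
        (\<forall>y\<in>Xs s. th (star S s) y = the_inv_into (Xs (star S s)) (th s) y)) \<and>
     A = (\<Union>s\<in>arr S. Xs s) \<and>
     (\<forall>s t. composable S s t \<longrightarrow>
        (\<forall>x. x \<in> Xs (star S t) \<and> th t x \<in> Xs (star S s) \<longrightarrow>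
           x \<in> Xs (star S (mult S s t)) \<and> th (mult S s t) x = th s (th t x))) \<and>
     (\<forall>s t. nat_le S s t \<longrightarrow> Xs s \<subseteq> Xs t)"

definition ordered_partial_action ::
  "('a, 'o, 'e) semigroupoid_scheme \<Rightarrow> 'x set \<Rightarrow> ('x \<Rightarrow> 'x \<Rightarrow> bool) \<Rightarrow> ('a \<Rightarrow> 'x set) \<Rightarrow> ('a \<Rightarrow> 'x \<Rightarrow> 'x) \<Rightarrow> bool" where
  "ordered_partial_action S A le Xs th \<longleftrightarrow>
     partial_action S A Xs th \<and>
     (\<forall>s\<in>arr S. \<forall>x\<in>A. \<forall>y\<in>Xs s. le x y \<longrightarrow> x \<in> Xs s) \<and>
     (\<forall>s\<in>arr S. \<forall>x\<in>Xs (star S s). \<forall>y\<in>Xs (star S s). le x y \<longleftrightarrow> le (th s x) (th s y))"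

end

theory Submission
  imports Defs
begin

lemma sl_basic:
  assumes "semilatticeoid X" "x \<in> arr X"
  shows "dm X x = cd X x" "mult X x x = x" "dm X x \<in> obj X"
  using assms unfolding semilatticeoid_def idempotent_def composable_def inverse_semigroupoid_def
  by auto

lemma sl_closed:
  assumes "semilatticeoid X" "composable X x y"
  shows "mult X x y \<in> arr X" "dm X (mult X x y) = dm X y" "cd X (mult X x y) = cd X x"
  using assms unfolding semilatticeoid_def inverse_semigroupoid_def by auto

lemma sl_assoc:
  assumes "semilatticeoid X" "composable X r s" "composable X s t"
  shows "mult X (mult X r s) t = mult X r (mult X s t)"
  using assms unfolding semilatticeoid_def inverse_semigroupoid_def by auto

lemma sl_star_uniq:
  assumes "semilatticeoid X" "s \<in> arr X" "t \<in> arr X" "dm X t = cd X s" "cd X t = dm X s"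
    "mult X (mult X s t) s = s" "mult X (mult X t s) t = t"
  shows "t = star X s"
  using assms unfolding semilatticeoid_def inverse_semigroupoid_def by blast

lemma sl_aux:
  assumes X: "semilatticeoid X" and e: "e \<in> arr X" and f: "f \<in> arr X"
    and o: "dm X e = dm X f" "cd X e = dm X f" "cd X f = dm X f"
  shows "mult X (mult X (mult X e f) (mult X f e)) (mult X e f) = mult X e f"
proof -
  note b = sl_basic[OF X]
  have C: "\<And>u v. u \<in> arr X \<Longrightarrow> v \<in> arr X \<Longrightarrow> dm X u = dm X f \<Longrightarrow> dm X v = dm X f \<Longrightarrow> composable X u v"
    using b by (auto simp: composable_def)
  have cl: "\<And>u v. u \<in> arr X \<Longrightarrow> v \<in> arr X \<Longrightarrow> dm X u = dm X f \<Longrightarrow> dm X v = dm X f \<Longrightarrow>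
     mult X u v \<in> arr X \<and> dm X (mult X u v) = dm X f"
    using sl_closed[OF X] C by auto
  have A: "\<And>u v w. u \<in> arr X \<Longrightarrow> v \<in> arr X \<Longrightarrow> w \<in> arr X \<Longrightarrow> dm X u = dm X f \<Longrightarrow> dm X v = dm X f \<Longrightarrow> dm X w = dm X f \<Longrightarrow>
     mult X (mult X u v) w = mult X u (mult X v w)"
    using sl_assoc[OF X] C by auto
  define x where "x = mult X e f"
  define y where "y = mult X f e"
  have x: "x \<in> arr X" "dm X x = dm X f" using cl[OF e f] o x_def by auto
  have y: "y \<in> arr X" "dm X y = dm X f" using cl[OF f e] o y_def by auto
  have fy: "mult X f y = y" unfolding y_def using A[OF f f e] o b(2)[OF f] by simp
  have xy: "mult X x y = mult X e y" unfolding x_def using A[OF e f y(1)] o y fy by simp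
  have ex: "mult X e x = x" unfolding x_def using A[OF e e f] o b(2)[OF e] by simp
  have yx: "mult X y x = mult X f x" unfolding y_def using A[OF f e x(1)] o x ex by simp
  have "mult X (mult X x y) x = mult X e (mult X y x)" using xy A[OF e y(1) x(1)] o x y by simp
  also have "\<dots> = mult X e (mult X f x)" using yx by simp
  also have "\<dots> = mult X x x" using A[OF e f x(1)] o x x_def by simp
  also have "\<dots> = x" using b(2)[OF x(1)] .
  finally show ?thesis unfolding x_def y_def .
qed

lemma sl_comm:
  assumes X: "semilatticeoid X" and c: "composable X e f"
  shows "mult X e f = mult X f e"
proof -
  have e: "e \<in> arr X" and f: "f \<in> arr X" and def: "dm X e = cd X f" using c by (auto simp: composable_def)
  note b = sl_basic[OF X]
  have o: "dm X e = dm X f" "cd X e = dm X f" "cd X f = dm X f" using b[OF e] b[OF f] def by auto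
  have cfe: "composable X f e" using e f o by (auto simp: composable_def)
  define x where "x = mult X e f"
  define y where "y = mult X f e"
  have x: "x \<in> arr X" "dm X x = dm X f" "cd X x = dm X f" using sl_closed[OF X c] o unfolding x_def by auto
  have y: "y \<in> arr X" "dm X y = dm X f" "cd X y = dm X f" using sl_closed[OF X cfe] o unfolding y_def by auto
  have sx: "star X x = x"
    using sl_star_uniq[OF X x(1) x(1)] x b(2)[OF x(1)] by auto
  have "y = star X x"
    apply (rule sl_star_uniq[OF X x(1) y(1)])
    using x y sl_aux[OF X e f o] sl_aux[OF X f e] o unfolding x_def y_def by auto
  thus ?thesis using sx x_def y_def by simp
qed

lemma sl_le:
  assumes X: "semilatticeoid X"
  shows "nat_le X a b \<longleftrightarrow> a \<in> arr X \<and> b \<in> arr X \<and> dm X a = dm X b \<and> a = mult X b a"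
proof
  assume "nat_le X a b"
  then obtain e where a: "a \<in> arr X" "b \<in> arr X" "dm X a = dm X b" and e: "idempotent X e" "composable X b e" "a = mult X b e"
    unfolding nat_le_def by auto
  have ce: "composable X e e" using e by (simp add: idempotent_def)
  have cbb: "composable X b b" using a(2) sl_basic[OF X a(2)] by (simp add: composable_def)
  have "mult X b a = mult X (mult X b b) e" using sl_assoc[OF X cbb e(2)] e(3) by simp
  thus "a \<in> arr X \<and> b \<in> arr X \<and> dm X a = dm X b \<and> a = mult X b a"
    using a e sl_basic[OF X a(2)] by simp
next
  assume h: "a \<in> arr X \<and> b \<in> arr X \<and> dm X a = dm X b \<and> a = mult X b a"
  have "idempotent X a" using X h by (simp add: semilatticeoid_def)
  moreover have "composable X b a" using h sl_basic(1)[OF X, of a] sl_basic(1)[OF X, of b] unfolding composable_def by metis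
  moreover have "cd X a = cd X b" using h sl_basic[OF X, of a] sl_basic[OF X, of b] by simp
  ultimately show "nat_le X a b" using h unfolding nat_le_def by blast
qed

lemma sl_leD:
  assumes X: "semilatticeoid X" and "nat_le X a b"
  shows "a \<in> arr X" "b \<in> arr X" "dm X a = dm X b" "a = mult X b a"
  using assms sl_le[OF X] by blast+

lemma sl_leI:
  assumes X: "semilatticeoid X" and "a \<in> arr X" "b \<in> arr X" "dm X a = dm X b" "a = mult X b a"
  shows "nat_le X a b"
  using assms sl_le[OF X] by blast

lemma sl_prod_le:
  assumes X: "semilatticeoid X" and c: "composable X x y"
  shows "nat_le X (mult X x y) x" "nat_le X (mult X x y) y"
proof -
  have x: "x \<in> arr X" and y: "y \<in> arr X" and d: "dm X x = cd X y" using c by (auto simp: composable_def)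
  note b = sl_basic[OF X]
  have o: "dm X x = dm X y" using b(1)[OF y] d by simp
  have cxx: "composable X x x" "composable X y y" "composable X y x" using x y o b(1)[OF x] b(1)[OF y]
    by (auto simp: composable_def)
  have "mult X x (mult X x y) = mult X x y" using sl_assoc[OF X cxx(1) c] b(2)[OF x] by simp
  thus "nat_le X (mult X x y) x" using sl_leI[OF X] sl_closed[OF X c] x o by metis
  have "mult X y (mult X x y) = mult X x y"
    using sl_comm[OF X c] sl_assoc[OF X cxx(2) cxx(3)] b(2)[OF y] by simp
  thus "nat_le X (mult X x y) y" using sl_leI[OF X] sl_closed[OF X c] y o by metis
qed

lemma sl_meet:
  assumes X: "semilatticeoid X" and c: "composable X a b" and za: "nat_le X z a" and zb: "nat_le X z b"
  shows "nat_le X z (mult X a b)"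
proof -
  have a: "a \<in> arr X" and b: "b \<in> arr X" and d: "dm X a = cd X b" using c by (auto simp: composable_def)
  note bs = sl_basic[OF X]
  have z: "z \<in> arr X" "dm X z = dm X a" "z = mult X a z" "z = mult X b z" using sl_leD[OF X za] sl_leD[OF X zb] by auto
  have o: "dm X a = dm X b" using bs(1)[OF b] d by simp
  have cbz: "composable X b z" using b z o bs(1)[OF z(1)] by (auto simp: composable_def)
  have "mult X (mult X a b) z = mult X a (mult X b z)" using sl_assoc[OF X c cbz] .
  hence "z = mult X (mult X a b) z" using z by simp
  thus ?thesis using sl_leI[OF X] z sl_closed[OF X c] o by metis
qed

lemma sl_antisym:
  assumes X: "semilatticeoid X" and "nat_le X a b" "nat_le X b a"
  shows "a = b"
proof -
  have h: "a \<in> arr X" "b \<in> arr X" "dm X a = dm X b" "a = mult X b a" "b = mult X a b"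
    using sl_leD[OF X assms(2)] sl_leD[OF X assms(3)] by auto
  have "composable X a b" using h sl_basic(1)[OF X, of a] sl_basic(1)[OF X, of b] unfolding composable_def by metis
  thus ?thesis using sl_comm[OF X] h by metis
qed

lemma part_a:
  assumes X: "semilatticeoid X"
    and O: "ordered_partial_action S (arr X) (nat_le X) Xs th"
    and t: "t \<in> arr S" and x: "x \<in> arr X" and y: "y \<in> Xs t" and c: "composable X x y"
  shows "mult X x y \<in> Xs t"
proof -
  have "mult X x y \<in> arr X" using sl_closed[OF X c] by simp
  moreover have "nat_le X (mult X x y) y" using sl_prod_le[OF X c] by simp
  ultimately show ?thesis using O t y unfolding ordered_partial_action_def by blast
qed

theorem mainTheorem8:
  fixes S :: "('a, 'o) semigroupoid" and X :: "('x, 'p) semigroupoid"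
    and Xs :: "'a \<Rightarrow> 'x set" and th :: "'a \<Rightarrow> 'x \<Rightarrow> 'x"
  assumes "inverse_semigroupoid S"
    and "semilatticeoid X"
    and "ordered_partial_action S (arr X) (nat_le X) Xs th"
    and "s \<in> arr S"
  shows "(\<forall>x y. x \<in> arr X \<and> y \<in> Xs s \<and> composable X x y \<longrightarrow> mult X x y \<in> Xs s)
       \<and> (\<forall>x\<in>Xs (star S s). \<forall>y\<in>Xs (star S s). composable X x y \<longrightarrow>
            composable X (th s x) (th s y) \<and> th s (mult X x y) = mult X (th s x) (th s y))"
proof -
  note X = assms(2) and O = assms(3)
  have PA: "partial_action S (arr X) Xs th" using O by (simp add: ordered_partial_action_def)
  have ss: "star S s \<in> arr S" using assms(1,4) by (simp add: inverse_semigroupoid_def)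
  have bij: "bij_betw (th s) (Xs (star S s)) (Xs s)" using PA assms(4) by (simp add: partial_action_def)
  have sub0: "\<forall>t\<in>arr S. Xs t \<subseteq> arr X" using PA unfolding partial_action_def by (elim conjE)
  have sub: "\<And>t. t \<in> arr S \<Longrightarrow> Xs t \<subseteq> arr X" using sub0 by blast
  have ideal0: "\<forall>t\<in>arr S. \<forall>x\<in>arr X. \<forall>y\<in>Xs t. nat_le X x y \<longrightarrow> x \<in> Xs t"
    using O unfolding ordered_partial_action_def by (elim conjE)
  have iso: "\<And>x y. x \<in> Xs (star S s) \<Longrightarrow> y \<in> Xs (star S s) \<Longrightarrow> nat_le X x y \<longleftrightarrow> nat_le X (th s x) (th s y)"
  proof -
    have "\<forall>s\<in>arr S. \<forall>x\<in>Xs (star S s). \<forall>y\<in>Xs (star S s). nat_le X x y \<longleftrightarrow> nat_le X (th s x) (th s y)"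
      using O unfolding ordered_partial_action_def by (elim conjE)
    thus "\<And>x y. x \<in> Xs (star S s) \<Longrightarrow> y \<in> Xs (star S s) \<Longrightarrow> nat_le X x y \<longleftrightarrow> nat_le X (th s x) (th s y)"
      using assms(4) by blast
  qed
  have A: "\<forall>x y. x \<in> arr X \<and> y \<in> Xs s \<and> composable X x y \<longrightarrow> mult X x y \<in> Xs s"
    using part_a[OF X O assms(4)] by blast
  have B: "composable X (th s x) (th s y) \<and> th s (mult X x y) = mult X (th s x) (th s y)"
    if x: "x \<in> Xs (star S s)" and y: "y \<in> Xs (star S s)" and c: "composable X x y" for x y
  proof -
    define z where "z = mult X x y"
    have xa: "x \<in> arr X" using x sub[OF ss] by (rule subsetD[rotated])
    have z: "z \<in> Xs (star S s)" unfolding z_def by (rule part_a[OF X O ss xa y c])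
    have zx: "nat_le X (th s z) (th s x)" and zy: "nat_le X (th s z) (th s y)"
      using sl_prod_le[OF X c] iso[OF z x] iso[OF z y] z_def by auto
    have txs: "th s x \<in> Xs s" "th s y \<in> Xs s" using bij x y unfolding bij_betw_def by auto
    have tx: "th s x \<in> arr X" "th s y \<in> arr X" using txs sub[OF assms(4)] by auto
    have "dm X (th s x) = dm X (th s y)" using sl_leD(3)[OF X zx] sl_leD(3)[OF X zy] by simp
    hence cab: "composable X (th s x) (th s y)"
      using tx sl_basic(1)[OF X, of "th s x"] sl_basic(1)[OF X, of "th s y"] unfolding composable_def by metis
    define w where "w = mult X (th s x) (th s y)"
    have wa: "nat_le X w (th s x)" and wb: "nat_le X w (th s y)" using sl_prod_le[OF X cab] w_def by auto
    have warr: "w \<in> arr X" using sl_closed(1)[OF X cab] w_def by simp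
    have w: "w \<in> Xs s" using ideal0 assms(4) warr txs(1) wa by blast
    have img: "th s ` Xs (star S s) = Xs s" using bij by (simp add: bij_betw_def)
    have "w \<in> th s ` Xs (star S s)" using w img by simp
    then obtain u where u: "u \<in> Xs (star S s)" "th s u = w" by (elim imageE) simp
    have "nat_le X u x" "nat_le X u y" using iso[OF u(1) x] iso[OF u(1) y] u wa wb by auto
    hence "nat_le X u z" using sl_meet[OF X c] z_def by simp
    hence "nat_le X w (th s z)" using iso[OF u(1) z] u by simp
    moreover have "nat_le X (th s z) w" using sl_meet[OF X cab zx zy] w_def by simp
    ultimately have "th s z = w" using sl_antisym[OF X] by blast
    thus ?thesis using cab z_def w_def by simp
  qed
  show ?thesis using A B by blast
qed

end
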